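(* Let $\lambda_1(u),\lambda_2(u)$ be formal series $\lambda_i(u)=1+\lambda_i^{(1)}u^{-1}+\lambda_i^{(2)}u^{-2}+\cdots$ with $\lambda_i^{(r)}\in\mathbb{C}$, such that the ratio $\lambda_1(u)/\lambda_2(u)$ is the Laurent expansion at $u=\infty$ of a rational function in $u$. Then the Verma module $M(\lambda_1(u),\lambda_2(u))$ over $\mathrm{Y}(\mathfrak{gl}_2)$ is reducible.
   Context: The Yangian $\mathrm{Y}(\mathfrak{gl}_2)$ is the associative algebra over $\mathbb{C}$ with generators $t_{ij}^{(r)}$, $i,j\in\{1,2\}$, $r\ge1$, and defining relations $[t_{ij}^{(r+1)},t_{kl}^{(s)}]-[t_{ij}^{(r)},t_{kl}^{(s+1)}]=t_{kj}^{(r)}t_{il}^{(s)}-t_{kj}^{(s)}t_{il}^{(r)}$ for $r,s\ge0$, where $t_{ij}^{(0)}=\delta_{ij}$. The Verma module $M(\lambda_1(u),\lambda_2(u))$ is the quotient of $\mathrm{Y}(\mathfrak{gl}_2)$ by the left ideal generated by $t_{12}^{(r)}$, $t_{11}^{(r)}-\lambda_1^{(r)}$, $t_{22}^{(r)}-\lambda_2^{(r)}$, $r\ge1$. *)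

theory Defs
  imports "HOL-Computational_Algebra.Polynomial_FPS"
begin

datatype idx = I1 | I2

text \<open>Gen i j r stands for the generator t_ij^(r).  The symbol with r = 0 is
  included as a free generator but identified with delta_ij by a relation below.\<close>
datatype gen = Gen idx idx nat

type_synonym fa = "gen list \<Rightarrow> complex"

definition fa_carrier :: "fa set" where
  "fa_carrier = {f. finite {w. f w \<noteq> 0}}"

definition fa_zero :: fa where "fa_zero = (\<lambda>w. 0)"
definition fa_one :: fa where "fa_one = (\<lambda>w. if w = [] then 1 else 0)"
definition fa_add :: "fa \<Rightarrow> fa \<Rightarrow> fa" where "fa_add f g = (\<lambda>w. f w + g w)"
definition fa_sub :: "fa \<Rightarrow> fa \<Rightarrow> fa" where "fa_sub f g = (\<lambda>w. f w - g w)"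
definition fa_smult :: "complex \<Rightarrow> fa \<Rightarrow> fa" where "fa_smult c f = (\<lambda>w. c * f w)"
definition fa_mult :: "fa \<Rightarrow> fa \<Rightarrow> fa" where
  "fa_mult f g = (\<lambda>w. \<Sum>k\<le>length w. f (take k w) * g (drop k w))"
definition fa_comm :: "fa \<Rightarrow> fa \<Rightarrow> fa" where
  "fa_comm f g = fa_sub (fa_mult f g) (fa_mult g f)"

definition tg :: "idx \<Rightarrow> idx \<Rightarrow> nat \<Rightarrow> fa" where
  "tg i j r = (\<lambda>w. if w = [Gen i j r] then 1 else 0)"

definition kdelta :: "idx \<Rightarrow> idx \<Rightarrow> fa" where
  "kdelta i j = (if i = j then fa_one else fa_zero)"

definition yangian_rels :: "fa set" where
  "yangian_rels =
     {fa_sub (tg i j 0) (kdelta i j) | i j. True} \<union>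
     {fa_sub (fa_sub (fa_comm (tg i j (Suc r)) (tg k l s)) (fa_comm (tg i j r) (tg k l (Suc s))))
             (fa_sub (fa_mult (tg k j r) (tg i l s)) (fa_mult (tg k j s) (tg i l r)))
      | i j k l r s. True}"

inductive_set two_sided_ideal :: "fa set \<Rightarrow> fa set" for R where
  zero: "fa_zero \<in> two_sided_ideal R"
| gen: "x \<in> R \<Longrightarrow> a \<in> fa_carrier \<Longrightarrow> b \<in> fa_carrier \<Longrightarrow>
        fa_mult (fa_mult a x) b \<in> two_sided_ideal R"
| add: "x \<in> two_sided_ideal R \<Longrightarrow> y \<in> two_sided_ideal R \<Longrightarrow> fa_add x y \<in> two_sided_ideal R"
| smult: "x \<in> two_sided_ideal R \<Longrightarrow> fa_smult c x \<in> two_sided_ideal R"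

inductive_set left_ideal :: "fa set \<Rightarrow> fa set" for R where
  zero: "fa_zero \<in> left_ideal R"
| gen: "x \<in> R \<Longrightarrow> a \<in> fa_carrier \<Longrightarrow> fa_mult a x \<in> left_ideal R"
| add: "x \<in> left_ideal R \<Longrightarrow> y \<in> left_ideal R \<Longrightarrow> fa_add x y \<in> left_ideal R"
| smult: "x \<in> left_ideal R \<Longrightarrow> fa_smult c x \<in> left_ideal R"

text \<open>Y(gl_2) = fa_carrier / yangian_ideal.\<close>
definition yangian_ideal :: "fa set" where
  "yangian_ideal = two_sided_ideal yangian_rels"

text \<open>Preimage in the free algebra of the left ideal of Y(gl_2) generated by
  t_12^(r), t_11^(r) - lam1^(r), t_22^(r) - lam2^(r), r \<ge> 1.  The Verma module
  is fa_carrier / verma_ideal (= Y(gl_2) modulo that left ideal).\<close>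
definition verma_ideal :: "(nat \<Rightarrow> complex) \<Rightarrow> (nat \<Rightarrow> complex) \<Rightarrow> fa set" where
  "verma_ideal lam1 lam2 = left_ideal (yangian_ideal \<union>
     {tg I1 I2 r | r. r \<ge> 1} \<union>
     {fa_sub (tg I1 I1 r) (fa_smult (lam1 r) fa_one) | r. r \<ge> 1} \<union>
     {fa_sub (tg I2 I2 r) (fa_smult (lam2 r) fa_one) | r. r \<ge> 1})"

definition qcoset :: "fa set \<Rightarrow> fa \<Rightarrow> fa set" where
  "qcoset L x = {fa_add x l | l. l \<in> L}"

definition qmodule :: "fa set \<Rightarrow> fa set set" where
  "qmodule L = qcoset L ` fa_carrier"

text \<open>N is a submodule (over the free algebra, equivalently over Y(gl_2), since
  the Yangian ideal acts trivially) of the quotient module fa_carrier / L\<close>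
definition is_submodule :: "fa set \<Rightarrow> fa set set \<Rightarrow> bool" where
  "is_submodule L N \<longleftrightarrow> N \<subseteq> qmodule L \<and> qcoset L fa_zero \<in> N \<and>
     (\<forall>x\<in>fa_carrier. \<forall>y\<in>fa_carrier. qcoset L x \<in> N \<longrightarrow> qcoset L y \<in> N \<longrightarrow>
         qcoset L (fa_add x y) \<in> N) \<and>
     (\<forall>c. \<forall>x\<in>fa_carrier. qcoset L x \<in> N \<longrightarrow> qcoset L (fa_smult c x) \<in> N) \<and>
     (\<forall>a\<in>fa_carrier. \<forall>x\<in>fa_carrier. qcoset L x \<in> N \<longrightarrow> qcoset L (fa_mult a x) \<in> N)"

definition qmodule_reducible :: "fa set \<Rightarrow> bool" where
  "qmodule_reducible L \<longleftrightarrow>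
     (\<exists>N. is_submodule L N \<and> N \<noteq> {qcoset L fa_zero} \<and> N \<noteq> qmodule L)"

text \<open>lam r (r \<ge> 1) are the coefficients lambda^(r); the series lambda(u) =
  1 + sum_r lambda^(r) u^-r is encoded as a formal power series in z = u^-1.\<close>
definition hw_series :: "(nat \<Rightarrow> complex) \<Rightarrow> complex fps" where
  "hw_series lam = Abs_fps (\<lambda>r. if r = 0 then 1 else lam r)"

text \<open>A formal series in z = u^-1 is the expansion at u = infinity (z = 0) of a
  rational function in u iff it is the expansion at z = 0 of a rational function
  in z, i.e. Q * f = P for polynomials P, Q with Q \<noteq> 0.\<close>
definition is_rational_expansion :: "complex fps \<Rightarrow> bool" where
  "is_rational_expansion f \<longleftrightarrow>
     (\<exists>P Q :: complex poly. Q \<noteq> 0 \<and> fps_of_poly Q * f = fps_of_poly P)"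

end

theory Submission
  imports Defs "HOL-Library.Function_Algebras" "HOL-Computational_Algebra.Fundamental_Theorem_Algebra"
begin

unbundle fps_syntax

instance idx :: finite
proof
  have "(UNIV :: idx set) = {I1, I2}" by (auto intro: idx.exhaust)
  then show "finite (UNIV :: idx set)" by (metis finite.emptyI finite.insertI)
qed

lemma UNIV_idx: "(UNIV :: idx set) = {I1, I2}" by (auto intro: idx.exhaust)

definition yrel :: "(idx \<Rightarrow> idx \<Rightarrow> nat \<Rightarrow> 'r::ring_1) \<Rightarrow> bool" where
  "yrel T \<longleftrightarrow> (\<forall>i j. T i j 0 = (if i = j then 1 else 0)) \<and>
    (\<forall>i j k l r s. (T i j (Suc r) * T k l s - T k l s * T i j (Suc r)) -
        (T i j r * T k l (Suc s) - T k l (Suc s) * T i j r) = T k j r * T i l s - T k j s * T i l r)"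

definition prod_fam :: "(idx \<Rightarrow> idx \<Rightarrow> nat \<Rightarrow> 'r::ring_1) \<Rightarrow> (idx \<Rightarrow> idx \<Rightarrow> nat \<Rightarrow> 'r) \<Rightarrow> idx \<Rightarrow> idx \<Rightarrow> nat \<Rightarrow> 'r" where
  "prod_fam A B i j r = (\<Sum>a=0..r. \<Sum>p\<in>UNIV. A i p a * B p j (r - a))"

definition TZ :: "(idx \<Rightarrow> idx \<Rightarrow> nat \<Rightarrow> 'r::ring_1) \<Rightarrow> idx \<Rightarrow> idx \<Rightarrow> 'r fps fps" where
  "TZ T i j = Abs_fps (\<lambda>a. fps_const (T i j a))"
definition TW :: "(idx \<Rightarrow> idx \<Rightarrow> nat \<Rightarrow> 'r::ring_1) \<Rightarrow> idx \<Rightarrow> idx \<Rightarrow> 'r fps fps" where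
  "TW T i j = fps_const (Abs_fps (T i j))"

abbreviation ZZ :: "'r::ring_1 fps fps" where "ZZ \<equiv> fps_X"
abbreviation WW :: "'r::ring_1 fps fps" where "WW \<equiv> fps_const fps_X"

lemma ZZ_central: "ZZ * F = F * (ZZ :: 'r::ring_1 fps fps)"
  by (rule fps_mult_fps_X_commute)

lemma WW_central: "WW * F = F * (WW :: 'r::ring_1 fps fps)"
  by (simp add: fps_const_mult_left fps_const_mult_right fps_mult_fps_X_commute)

lemma TZTW_nth: "(TZ A i j * TW B k l) $ a $ b = A i j a * B k l b"
  by (simp add: TZ_def TW_def fps_const_mult_right fps_const_mult_left)
lemma TWTZ_nth: "(TW B k l * TZ A i j) $ a $ b = B k l b * A i j a"
  by (simp add: TZ_def TW_def fps_const_mult_right fps_const_mult_left)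

lemma WW_mult_nth: "((WW :: 'r::ring_1 fps fps) * F) $ a $ b = (if b = 0 then 0 else F $ a $ (b - 1))"
  by (simp add: fps_const_mult_left)

lemma lhs_nth:
  "((WW - ZZ) * (TZ T i j * TW T k l - TW T k l * TZ T i j)) $ a $ b =
    (if b = 0 then 0 else T i j a * T k l (b-1) - T k l (b-1) * T i j a) -
    (if a = 0 then 0 else T i j (a-1) * T k l b - T k l b * T i j (a-1))"
  by (simp only: left_diff_distrib WW_mult_nth fps_sub_nth TZTW_nth TWTZ_nth fps_X_mult_nth) (simp add: TZTW_nth TWTZ_nth)

lemma rhs_nth:
  "(ZZ * WW * (TZ T k j * TW T i l - TW T k j * TZ T i l)) $ a $ b =
    (if a = 0 \<or> b = 0 then 0 else T k j (a-1) * T i l (b-1) - T k j (b-1) * T i l (a-1))"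
  by (simp only: mult.assoc WW_mult_nth fps_sub_nth TZTW_nth TWTZ_nth fps_X_mult_nth) (auto simp: TZTW_nth TWTZ_nth)

definition dbl_rel :: "(idx \<Rightarrow> idx \<Rightarrow> nat \<Rightarrow> 'r::ring_1) \<Rightarrow> bool" where
  "dbl_rel T \<longleftrightarrow> (\<forall>i j k l. (WW - ZZ) * (TZ T i j * TW T k l - TW T k l * TZ T i j) =
       ZZ * WW * (TZ T k j * TW T i l - TW T k j * TZ T i l))"

lemma yrel_dbl: assumes "yrel T" shows "dbl_rel T"
  unfolding dbl_rel_def
proof (intro allI)
  fix i j k l
  have T0: "\<And>i j. T i j 0 = (if i = j then 1 else 0)" using assms by (simp add: yrel_def)
  have R: "\<And>r s. (T i j (Suc r) * T k l s - T k l s * T i j (Suc r)) -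
        (T i j r * T k l (Suc s) - T k l (Suc s) * T i j r) = T k j r * T i l s - T k j s * T i l r"
    using assms by (simp add: yrel_def)
  show "(WW - ZZ) * (TZ T i j * TW T k l - TW T k l * TZ T i j) =
       ZZ * WW * (TZ T k j * TW T i l - TW T k j * TZ T i l)"
  proof (rule fps_ext, rule fps_ext)
    fix a b
    show "((WW - ZZ) * (TZ T i j * TW T k l - TW T k l * TZ T i j)) $ a $ b =
       (ZZ * WW * (TZ T k j * TW T i l - TW T k j * TZ T i l)) $ a $ b"
      unfolding lhs_nth rhs_nth
    proof (cases a; cases b)
      fix r s assume "a = Suc r" "b = Suc s"
      then show "(if b = 0 then 0 else T i j a * T k l (b - 1) - T k l (b - 1) * T i j a) -
         (if a = 0 then 0 else T i j (a - 1) * T k l b - T k l b * T i j (a - 1)) =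
         (if a = 0 \<or> b = 0 then 0 else T k j (a - 1) * T i l (b - 1) - T k j (b - 1) * T i l (a - 1))"
        using R[of r s] by simp
    qed (auto simp: T0)
  qed
qed

lemma dbl_yrel: assumes "dbl_rel T" "\<And>i j. T i j 0 = (if i = j then 1 else 0)" shows "yrel T"
  unfolding yrel_def
proof (intro conjI allI)
  fix i j show "T i j 0 = (if i = j then 1 else 0)" by (rule assms(2))
next
  fix i j k l r s
  have "((WW - ZZ) * (TZ T i j * TW T k l - TW T k l * TZ T i j)) $ Suc r $ Suc s =
       (ZZ * WW * (TZ T k j * TW T i l - TW T k j * TZ T i l)) $ Suc r $ Suc s"
    using assms(1) by (simp add: dbl_rel_def)
  then show "(T i j (Suc r) * T k l s - T k l s * T i j (Suc r)) -
        (T i j r * T k l (Suc s) - T k l (Suc s) * T i j r) = T k j r * T i l s - T k j s * T i l r"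
    unfolding lhs_nth rhs_nth by simp
qed

definition comm_fam :: "(idx \<Rightarrow> idx \<Rightarrow> nat \<Rightarrow> 'r::ring_1) \<Rightarrow> (idx \<Rightarrow> idx \<Rightarrow> nat \<Rightarrow> 'r) \<Rightarrow> bool" where
  "comm_fam A B \<longleftrightarrow> (\<forall>i j k l a b. A i j a * B k l b = B k l b * A i j a)"

lemma fps_const_sum: "fps_const (sum f S) = (\<Sum>x\<in>S. fps_const (f x))"
  by (rule fps_ext) (simp add: fps_sum_nth)

lemma TZ_prod: "TZ (prod_fam A B) i j = (\<Sum>p\<in>UNIV. TZ A i p * TZ B p j)"
proof (rule fps_ext)
  fix n
  show "TZ (prod_fam A B) i j $ n = (\<Sum>p\<in>UNIV. TZ A i p * TZ B p j) $ n"
    by (simp add: TZ_def prod_fam_def fps_sum_nth fps_mult_nth fps_const_sum sum.swap[of _ UNIV])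
qed

lemma TW_prod: "TW (prod_fam A B) i j = (\<Sum>p\<in>UNIV. TW A i p * TW B p j)"
proof -
  have "Abs_fps (prod_fam A B i j) = (\<Sum>p\<in>UNIV. Abs_fps (A i p) * Abs_fps (B p j))"
    by (rule fps_ext) (simp add: prod_fam_def fps_sum_nth fps_mult_nth sum.swap[of _ UNIV])
  then show ?thesis by (simp add: TW_def fps_const_sum)
qed

lemma comm_ZW: assumes "comm_fam A B" shows "TZ B p j * TW A k q = TW A k q * TZ B p j"
  using assms by (intro fps_ext) (simp add: fps_eq_iff TZTW_nth TWTZ_nth comm_fam_def)
lemma comm_WZ: assumes "comm_fam A B" shows "TW B q l * TZ A i p = TZ A i p * TW B q l"
  using assms by (intro fps_ext) (simp add: fps_eq_iff TZTW_nth TWTZ_nth comm_fam_def)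

lemma prod_fam_0:
  assumes "\<And>i j. A i j 0 = (if i = j then 1 else 0)" "\<And>i j. B i j 0 = (if i = j then 1 else 0)"
  shows "prod_fam A B i j 0 = (if i = j then 1 else 0)"
  using assms by (cases i; cases j) (simp_all add: prod_fam_def UNIV_idx)

lemma central_step:
  fixes D X X' Y Y' :: "'a::ring"
  assumes "\<And>F. D * F = F * D"
  shows "D * (X * Y - X' * Y') = (D * (X - X')) * Y + X' * (D * (Y - Y'))"
proof -
  have "D * (X * Y - X' * Y') = D * ((X - X') * Y + X' * (Y - Y'))"
    by (simp add: algebra_simps)
  also have "\<dots> = (D * (X - X')) * Y + (D * X') * (Y - Y')"
    by (simp add: distrib_left mult.assoc)
  also have "D * X' = X' * D" by (rule assms)
  finally show ?thesis by (simp add: mult.assoc)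
qed

lemma coprod_dbl:
  fixes A B :: "idx \<Rightarrow> idx \<Rightarrow> nat \<Rightarrow> 'r::ring_1"
  assumes dA: "dbl_rel A" and dB: "dbl_rel B" and c: "comm_fam A B"
  shows "dbl_rel (prod_fam A B)"
  unfolding dbl_rel_def
proof (intro allI)
  fix i j k l
  define D :: "'r fps fps" where "D = WW - ZZ"
  define E :: "'r fps fps" where "E = ZZ * WW"
  have Dc: "\<And>F. D * F = F * D" unfolding D_def
    by (simp add: left_diff_distrib right_diff_distrib ZZ_central WW_central)
  have Ec: "\<And>F. E * F = F * E" unfolding E_def
  proof -
    fix F :: "'r fps fps"
    have "ZZ * WW * F = ZZ * (WW * F)" by (simp add: mult.assoc)
    also have "\<dots> = ZZ * (F * WW)" by (simp add: WW_central)
    also have "\<dots> = (ZZ * F) * WW" by (simp add: mult.assoc)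
    also have "\<dots> = (F * ZZ) * WW" by (simp add: ZZ_central)
    finally show "ZZ * WW * F = F * (ZZ * WW)" by (simp add: mult.assoc)
  qed
  let ?az = "TZ A" and ?aw = "TW A" and ?bz = "TZ B" and ?bw = "TW B"
  have e1: "\<And>i j k l. TZ (prod_fam A B) i j * TW (prod_fam A B) k l =
     (\<Sum>p\<in>UNIV. \<Sum>q\<in>UNIV. (?az i p * ?aw k q) * (?bz p j * ?bw q l))"
  proof -
    fix i j k l
    have "TZ (prod_fam A B) i j * TW (prod_fam A B) k l =
       (\<Sum>p\<in>UNIV. \<Sum>q\<in>UNIV. ?az i p * (?bz p j * ?aw k q) * ?bw q l)"
      by (simp add: TZ_prod TW_prod sum_distrib_left sum_distrib_right mult.assoc) (rule sum.swap)
    also have "\<dots> = (\<Sum>p\<in>UNIV. \<Sum>q\<in>UNIV. (?az i p * ?aw k q) * (?bz p j * ?bw q l))"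
      by (simp add: comm_ZW[OF c] mult.assoc)
    finally show "?thesis i j k l" .
  qed
  have e2: "\<And>i j k l. TW (prod_fam A B) k l * TZ (prod_fam A B) i j =
     (\<Sum>p\<in>UNIV. \<Sum>q\<in>UNIV. (?aw k q * ?az i p) * (?bw q l * ?bz p j))"
  proof -
    fix i j k l
    have "TW (prod_fam A B) k l * TZ (prod_fam A B) i j =
       (\<Sum>p\<in>UNIV. \<Sum>q\<in>UNIV. ?aw k q * (?bw q l * ?az i p) * ?bz p j)"
      by (simp add: TZ_prod TW_prod sum_distrib_left sum_distrib_right mult.assoc)
    also have "\<dots> = (\<Sum>p\<in>UNIV. \<Sum>q\<in>UNIV. (?aw k q * ?az i p) * (?bw q l * ?bz p j))"
      by (simp add: comm_WZ[OF c] mult.assoc)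
    finally show "?thesis i j k l" .
  qed
  have rA: "\<And>i j k l. D * (?az i j * ?aw k l - ?aw k l * ?az i j) = E * (?az k j * ?aw i l - ?aw k j * ?az i l)"
    using dA by (simp add: dbl_rel_def D_def E_def)
  have rB: "\<And>i j k l. D * (?bz i j * ?bw k l - ?bw k l * ?bz i j) = E * (?bz k j * ?bw i l - ?bw k j * ?bz i l)"
    using dB by (simp add: dbl_rel_def D_def E_def)
  have "D * (TZ (prod_fam A B) i j * TW (prod_fam A B) k l - TW (prod_fam A B) k l * TZ (prod_fam A B) i j)
     = (\<Sum>p\<in>UNIV. \<Sum>q\<in>UNIV. D * ((?az i p * ?aw k q) * (?bz p j * ?bw q l) - (?aw k q * ?az i p) * (?bw q l * ?bz p j)))"
    by (simp add: e1 e2 sum_subtractf[symmetric] sum_distrib_left)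
  also have "\<dots> = (\<Sum>p\<in>UNIV. \<Sum>q\<in>UNIV. (E * (?az k p * ?aw i q - ?aw k p * ?az i q)) * (?bz p j * ?bw q l)
        + (?aw k q * ?az i p) * (E * (?bz q j * ?bw p l - ?bw q j * ?bz p l)))"
    by (intro sum.cong refl, subst central_step[OF Dc], simp only: rA rB)
  also have "\<dots> = E * ((\<Sum>p\<in>UNIV. \<Sum>q\<in>UNIV. ?az k p * ?aw i q * (?bz p j * ?bw q l))
        - (\<Sum>p\<in>UNIV. \<Sum>q\<in>UNIV. ?aw k p * ?az i q * (?bz p j * ?bw q l))
        + (\<Sum>p\<in>UNIV. \<Sum>q\<in>UNIV. ?aw k q * ?az i p * (?bz q j * ?bw p l))
        - (\<Sum>p\<in>UNIV. \<Sum>q\<in>UNIV. ?aw k q * ?az i p * (?bw q j * ?bz p l)))"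
  proof -
    have cE: "\<And>X Y. X * (E * Y) = E * (X * Y)" 
    proof -
      fix X Y
      have "X * (E * Y) = (X * E) * Y" by (simp add: mult.assoc)
      also have "\<dots> = (E * X) * Y" by (simp add: Ec)
      finally show "X * (E * Y) = E * (X * Y)" by (simp add: mult.assoc)
    qed
    have "\<And>p q. (E * (?az k p * ?aw i q - ?aw k p * ?az i q)) * (?bz p j * ?bw q l)
        + (?aw k q * ?az i p) * (E * (?bz q j * ?bw p l - ?bw q j * ?bz p l)) =
       E * (?az k p * ?aw i q * (?bz p j * ?bw q l) - ?aw k p * ?az i q * (?bz p j * ?bw q l)
         + ?aw k q * ?az i p * (?bz q j * ?bw p l) - ?aw k q * ?az i p * (?bw q j * ?bz p l))"
      by (simp only: cE mult.assoc[of E] distrib_left left_diff_distrib right_diff_distrib add_diff_eq)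
    then show ?thesis
      by (simp only: sum_distrib_left[symmetric] sum.distrib sum_subtractf)
  qed
  also have "(\<Sum>p\<in>UNIV. \<Sum>q\<in>UNIV. ?aw k q * ?az i p * (?bz q j * ?bw p l))
     = (\<Sum>p\<in>UNIV. \<Sum>q\<in>UNIV. ?aw k p * ?az i q * (?bz p j * ?bw q l))"
    by (rule sum.swap)
  also have "E * ((\<Sum>p\<in>UNIV. \<Sum>q\<in>UNIV. ?az k p * ?aw i q * (?bz p j * ?bw q l))
        - (\<Sum>p\<in>UNIV. \<Sum>q\<in>UNIV. ?aw k p * ?az i q * (?bz p j * ?bw q l))
        + (\<Sum>p\<in>UNIV. \<Sum>q\<in>UNIV. ?aw k p * ?az i q * (?bz p j * ?bw q l))
        - (\<Sum>p\<in>UNIV. \<Sum>q\<in>UNIV. ?aw k q * ?az i p * (?bw q j * ?bz p l)))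
     = E * (TZ (prod_fam A B) k j * TW (prod_fam A B) i l - TW (prod_fam A B) k j * TZ (prod_fam A B) i l)"
    by (simp add: e1 e2)
  finally show "(WW - ZZ) * (TZ (prod_fam A B) i j * TW (prod_fam A B) k l - TW (prod_fam A B) k l * TZ (prod_fam A B) i j) =
       ZZ * WW * (TZ (prod_fam A B) k j * TW (prod_fam A B) i l - TW (prod_fam A B) k j * TZ (prod_fam A B) i l)"
    by (simp add: D_def E_def)
qed

lemma yrel_prod:
  assumes "yrel A" "yrel B" "comm_fam A B"
  shows "yrel (prod_fam A B)"
proof (rule dbl_yrel)
  show "dbl_rel (prod_fam A B)" using assms by (intro coprod_dbl yrel_dbl)
  show "\<And>i j. prod_fam A B i j 0 = (if i = j then 1 else 0)"
    using assms(1,2) by (intro prod_fam_0) (simp_all add: yrel_def)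
qed

type_synonym vec = "(nat \<Rightarrow> nat) \<Rightarrow> complex"

definition lin :: "(vec \<Rightarrow> vec) \<Rightarrow> bool" where
  "lin f \<longleftrightarrow> (\<forall>x y. f (x + y) = f x + f y) \<and> (\<forall>c x. f (\<lambda>k. c * x k) = (\<lambda>k. c * f x k))"

typedef op = "{f. lin f}"
  morphisms app Abs_op
  by (rule exI[of _ id]) (simp add: lin_def)

setup_lifting type_definition_op

lemma lin_app: "lin (app X)" using app by simp

lemma app_add: "app X (x + y) = app X x + app X y"
  using lin_app[of X] by (simp add: lin_def)
lemma app_smul: "app X (\<lambda>k. c * x k) = (\<lambda>k. c * app X x k)"
  using lin_app[of X] by (simp add: lin_def)
lemma app_zero: "app X 0 = 0"
  using app_add[of X 0 0] by simp
lemma app_uminus: "app X (- x) = - app X x"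
proof -
  have "app X x + app X (- x) = 0" using app_add[of X x "- x"] by (simp add: app_zero)
  then show ?thesis by (metis minus_unique)
qed
lemma app_diff: "app X (x - y) = app X x - app X y"
  using app_add[of X x "- y"] by (simp add: app_uminus)

lemma op_eq_iff: "X = Y \<longleftrightarrow> (\<forall>x. app X x = app Y x)"
  by (metis app_inject ext)

instantiation op :: ring_1
begin
lift_definition zero_op :: op is "\<lambda>x. 0" by (simp add: lin_def fun_eq_iff)
lift_definition one_op :: op is "\<lambda>x. x" by (simp add: lin_def)
lift_definition plus_op :: "op \<Rightarrow> op \<Rightarrow> op" is "\<lambda>f g x. f x + g x"
  by (simp add: lin_def fun_eq_iff algebra_simps)
lift_definition minus_op :: "op \<Rightarrow> op \<Rightarrow> op" is "\<lambda>f g x. f x - g x"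
  by (simp add: lin_def fun_eq_iff algebra_simps)
lift_definition uminus_op :: "op \<Rightarrow> op" is "\<lambda>f x. - f x"
  by (simp add: lin_def fun_eq_iff algebra_simps)
lift_definition times_op :: "op \<Rightarrow> op \<Rightarrow> op" is "\<lambda>f g x. f (g x)"
  by (simp add: lin_def)
instance
proof
  fix a b c :: op
  show "a + b + c = a + (b + c)" by transfer (simp add: add.assoc)
  show "a + b = b + a" by transfer (simp add: add.commute)
  show "0 + a = a" by transfer simp
  show "- a + a = 0" by transfer simp
  show "a - b = a + - b" by transfer simp
  show "a * b * c = a * (b * c)" by transfer simp
  show "1 * a = a" by transfer simp
  show "a * 1 = a" by transfer simp
  show "(a + b) * c = a * c + b * c" by transfer simp
  show "a * (b + c) = a * b + a * c" by transfer (simp add: lin_def)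
  show "(0::op) \<noteq> 1"
  proof
    assume "(0::op) = 1"
    then have "app 0 (\<lambda>_. 1) = app 1 (\<lambda>_. 1)" by simp
    then show False by transfer (simp add: fun_eq_iff)
  qed
qed
end

lemma app_plus[simp]: "app (X + Y) x = app X x + app Y x" by transfer simp
lemma app_minus[simp]: "app (X - Y) x = app X x - app Y x" by transfer simp
lemma app_uminus_op[simp]: "app (- X) x = - app X x" by transfer simp
lemma app_times[simp]: "app (X * Y) x = app X (app Y x)" by transfer simp
lemma app_0[simp]: "app 0 x = 0" by transfer simp
lemma app_1[simp]: "app 1 x = x" by transfer simp
lemma app_sum[simp]: "app (sum F S) x = (\<Sum>s\<in>S. app (F s) x)"
  by (induction S rule: infinite_finite_induct) auto

lift_definition scal :: "complex \<Rightarrow> op" is "\<lambda>c x k. c * x k"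
  by (simp add: lin_def fun_eq_iff algebra_simps)

lemma app_scal[simp]: "app (scal c) x = (\<lambda>k. c * x k)" by transfer simp

lemma scal_comm: "scal c * X = X * scal c"
  by (simp add: op_eq_iff app_smul)
lemma scal_mult: "scal (c * d) = scal c * scal d"
  by (simp add: op_eq_iff fun_eq_iff)
lemma scal_add: "scal (c + d) = scal c + scal d"
  by (simp add: op_eq_iff fun_eq_iff algebra_simps)
lemma scal_diff: "scal (c - d) = scal c - scal d"
  by (simp add: op_eq_iff fun_eq_iff algebra_simps)
lemma scal_1[simp]: "scal 1 = 1"
  by (simp add: op_eq_iff fun_eq_iff)
lemma scal_0[simp]: "scal 0 = 0"
  by (simp add: op_eq_iff fun_eq_iff)
lemma scal_sum: "scal (sum f S) = (\<Sum>s\<in>S. scal (f s))"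
  by (induction S rule: infinite_finite_induct) (auto simp: scal_add)

lift_definition lop :: "nat \<Rightarrow> (nat \<Rightarrow> complex) \<Rightarrow> (nat \<Rightarrow> nat) \<Rightarrow> op" is
  "\<lambda>m w g x \<kappa>. w (\<kappa> m) * x (\<kappa>(m := g (\<kappa> m)))"
  by (simp add: lin_def fun_eq_iff algebra_simps)

lemma app_lop: "app (lop m w g) x \<kappa> = w (\<kappa> m) * x (\<kappa>(m := g (\<kappa> m)))"
  by transfer simp

lemma lop_comm:
  assumes "m \<noteq> m'"
  shows "lop m w g * lop m' w' g' = lop m' w' g' * lop m w g"
  using assms by (simp add: op_eq_iff fun_eq_iff app_lop fun_upd_twist)

definition E_op :: "nat \<Rightarrow> complex \<Rightarrow> complex \<Rightarrow> idx \<Rightarrow> idx \<Rightarrow> op" where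
  "E_op m a b i j = (case (i, j) of
      (I1, I1) \<Rightarrow> lop m (\<lambda>n. a - of_nat n) id
    | (I2, I2) \<Rightarrow> lop m (\<lambda>n. b + of_nat n) id
    | (I2, I1) \<Rightarrow> lop m (\<lambda>n. if n = 0 then 0 else 1) (\<lambda>n. n - 1)
    | (I1, I2) \<Rightarrow> lop m (\<lambda>n. (of_nat n + 1) * (a - b - of_nat n)) Suc)"

lemma E_op_gl:
  "E_op m a b i j * E_op m a b k l - E_op m a b k l * E_op m a b i j =
     (if k = j then E_op m a b i l else 0) - (if i = l then E_op m a b k j else 0)"
  apply (cases i; cases j; cases k; cases l)
  apply (auto simp: E_op_def op_eq_iff fun_eq_iff app_lop algebra_simps of_nat_diff)
  done


lemma sum_fun_apply: "(sum f S) k = (\<Sum>s\<in>S. f s k)"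
  by (induction S rule: infinite_finite_induct) auto

type_synonym fam = "idx \<Rightarrow> idx \<Rightarrow> nat \<Rightarrow> op"

definition ev_fam :: "nat \<Rightarrow> complex \<Rightarrow> complex \<Rightarrow> fam" where
  "ev_fam m a b i j r = (if r = 0 then (if i = j then 1 else 0) else if r = 1 then E_op m a b i j else 0)"

definition sc_fam :: "(nat \<Rightarrow> complex) \<Rightarrow> fam" where
  "sc_fam f i j r = (if i = j then scal (f r) else 0)"

definition one_fam :: fam where
  "one_fam i j r = (if r = 0 \<and> i = j then 1 else 0)"

lemma E_op_gl':
  "E_op m a b i j * E_op m a b k l =
     E_op m a b k l * E_op m a b i j + ((if k = j then E_op m a b i l else 0) - (if i = l then E_op m a b k j else 0))"
  using E_op_gl[of m a b i j k l] by (simp add: algebra_simps)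

lemma yrel_ev: "yrel (ev_fam m a b)"
  unfolding yrel_def
proof (intro conjI allI)
  fix i j show "ev_fam m a b i j 0 = (if i = j then 1 else 0)" by (simp add: ev_fam_def)
next
  fix i j k l r s
  have c: "r = 0 \<or> r = 1 \<or> r \<ge> (2::nat)" "s = 0 \<or> s = 1 \<or> s \<ge> (2::nat)" by auto
  show "ev_fam m a b i j (Suc r) * ev_fam m a b k l s - ev_fam m a b k l s * ev_fam m a b i j (Suc r) -
        (ev_fam m a b i j r * ev_fam m a b k l (Suc s) - ev_fam m a b k l (Suc s) * ev_fam m a b i j r) =
        ev_fam m a b k j r * ev_fam m a b i l s - ev_fam m a b k j s * ev_fam m a b i l r"
    using c
  proof (elim disjE)
    assume "r = 0" "s = 0" then show ?thesis by (simp add: ev_fam_def)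
  next
    assume "r = 0" "s = 1" then show ?thesis by (simp add: ev_fam_def E_op_gl)
  next
    assume "r = 1" "s = 0" then show ?thesis by (simp add: ev_fam_def E_op_gl)
  next
    assume "r = 1" "s = 1" then show ?thesis by (simp add: ev_fam_def)
  next
    assume "r = 0" "s \<ge> 2" then show ?thesis by (simp add: ev_fam_def)
  next
    assume "r = 1" "s \<ge> 2" then show ?thesis by (simp add: ev_fam_def)
  next
    assume "r \<ge> 2" "s = 0" then show ?thesis by (simp add: ev_fam_def)
  next
    assume "r \<ge> 2" "s = 1" then show ?thesis by (simp add: ev_fam_def)
  next
    assume "r \<ge> 2" "s \<ge> 2" then show ?thesis by (simp add: ev_fam_def)
  qed
qed

lemma yrel_sc: assumes "f 0 = 1" shows "yrel (sc_fam f)"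
  unfolding yrel_def
proof (intro conjI allI)
  fix i j show "sc_fam f i j 0 = (if i = j then 1 else 0)" by (simp add: sc_fam_def assms)
next
  fix i j k l r s
  show "sc_fam f i j (Suc r) * sc_fam f k l s - sc_fam f k l s * sc_fam f i j (Suc r) -
        (sc_fam f i j r * sc_fam f k l (Suc s) - sc_fam f k l (Suc s) * sc_fam f i j r) =
        sc_fam f k j r * sc_fam f i l s - sc_fam f k j s * sc_fam f i l r"
    by (cases i; cases j; cases k; cases l) (simp_all add: sc_fam_def scal_mult[symmetric] mult.commute)
qed

lemma yrel_one: "yrel one_fam"
  unfolding yrel_def one_fam_def by auto

fun fam_list :: "(complex \<times> complex) list \<Rightarrow> fam" where
  "fam_list [] = one_fam"
| "fam_list ((a, b) # l) = prod_fam (fam_list l) (ev_fam (Suc (length l)) a b)"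

definition csite :: "nat \<Rightarrow> op \<Rightarrow> bool" where
  "csite m X \<longleftrightarrow> (\<forall>w g. X * lop m w g = lop m w g * X)"

lemma csite_0[simp]: "csite m 0" and csite_1[simp]: "csite m 1"
  by (auto simp: csite_def)
lemma csite_scal[simp]: "csite m (scal c)"
  by (simp add: csite_def scal_comm)
lemma csite_add: "csite m X \<Longrightarrow> csite m Y \<Longrightarrow> csite m (X + Y)"
  by (simp add: csite_def algebra_simps)
lemma csite_mult: "csite m X \<Longrightarrow> csite m Y \<Longrightarrow> csite m (X * Y)"
  by (simp add: csite_def mult.assoc) (metis mult.assoc)
lemma csite_sum: "(\<And>s. s \<in> S \<Longrightarrow> csite m (F s)) \<Longrightarrow> csite m (sum F S)"
  by (induction S rule: infinite_finite_induct) (auto intro: csite_add)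
lemma csite_lop: "m \<noteq> m' \<Longrightarrow> csite m (lop m' w g)"
  by (simp add: csite_def lop_comm)
lemma csite_E: "m \<noteq> m' \<Longrightarrow> csite m (E_op m' a b i j)"
  by (cases i; cases j) (simp_all add: E_op_def csite_lop)
lemma csite_ev: "m \<noteq> m' \<Longrightarrow> csite m (ev_fam m' a b i j r)"
  by (simp add: ev_fam_def csite_E)

lemma csite_prod:
  assumes "\<And>i j r. csite m (A i j r)" "\<And>i j r. csite m (B i j r)"
  shows "csite m (prod_fam A B i j r)"
  unfolding prod_fam_def using assms by (intro csite_sum csite_mult) auto

lemma csite_fam_list: "m = 0 \<or> length l < m \<Longrightarrow> csite m (fam_list l i j r)"
proof (induction l arbitrary: i j r)
  case Nil then show ?case by (simp add: one_fam_def)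
next
  case (Cons p l)
  obtain a b where p: "p = (a, b)" by force
  show ?case using Cons by (auto simp: p intro!: csite_prod csite_ev)
qed

lemma comm_ev:
  assumes "\<And>i j r. csite m (A i j r)"
  shows "comm_fam A (ev_fam m a b)"
  unfolding comm_fam_def
proof (intro allI)
  fix i j k l x y
  show "A i j x * ev_fam m a b k l y = ev_fam m a b k l y * A i j x"
    using assms[of i j x] by (cases k; cases l) (auto simp: ev_fam_def E_op_def csite_def)
qed

lemma comm_fam_sym: "comm_fam A B \<Longrightarrow> comm_fam B A"
  by (simp add: comm_fam_def)

lemma comm_sc: "comm_fam (sc_fam f) B"
  by (simp add: comm_fam_def sc_fam_def scal_comm)

lemma yrel_fam_list: "yrel (fam_list l)"
proof (induction l)
  case Nil then show ?case by (simp add: yrel_one)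
next
  case (Cons p l)
  obtain a b where p: "p = (a, b)" by force
  show ?case unfolding p fam_list.simps
    using Cons by (intro yrel_prod yrel_ev comm_ev csite_fam_list) auto
qed

definition v0 :: vec where "v0 = (\<lambda>\<kappa>. if \<kappa> = (\<lambda>_. 0) then 1 else 0)"

definition hwv :: "fam \<Rightarrow> complex fps \<Rightarrow> complex fps \<Rightarrow> bool" where
  "hwv T P1 P2 \<longleftrightarrow> (\<forall>r. app (T I1 I2 r) v0 = 0 \<and>
      app (T I1 I1 r) v0 = (\<lambda>k. P1 $ r * v0 k) \<and> app (T I2 I2 r) v0 = (\<lambda>k. P2 $ r * v0 k))"

lemma sum_smul_fun: "(\<Sum>a\<in>S. (\<lambda>k. c a * x k)) = (\<lambda>k. (\<Sum>a\<in>S. c a) * (x::vec) k)"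
  by (simp add: fun_eq_iff sum_fun_apply sum_distrib_right)

lemma hw_prod:
  assumes A: "hwv A P1 P2" and B: "hwv B Q1 Q2" and c: "comm_fam A B"
  shows "hwv (prod_fam A B) (P1 * Q1) (P2 * Q2)"
  unfolding hwv_def
proof (intro allI conjI)
  fix r
  have cm: "\<And>i j k l a b. app (A i j a) (app (B k l b) x) = app (B k l b) (app (A i j a) x)" for x
    using c unfolding comm_fam_def by (metis app_times)
  show "app (prod_fam A B I1 I2 r) v0 = 0"
  proof -
    have z1: "app (A I1 I1 a) (app (B I1 I2 (r-a)) v0) = 0" for a
      using B by (simp add: hwv_def app_zero)
    have z2: "app (A I1 I2 a) (app (B I2 I2 (r-a)) v0) = 0" for a
      using A B by (simp add: hwv_def app_smul zero_fun_def)
    show ?thesis by (simp add: prod_fam_def UNIV_idx z1 z2)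
  qed
  show "app (prod_fam A B I1 I1 r) v0 = (\<lambda>k. (P1 * Q1) $ r * v0 k)"
  proof -
    have "app (prod_fam A B I1 I1 r) v0 = (\<Sum>a=0..r. (\<lambda>k. (P1 $ a * Q1 $ (r - a)) * v0 k))"
    proof (unfold prod_fam_def app_sum, intro sum.cong refl)
      fix a
      have "app (A I1 I2 a) (app (B I2 I1 (r - a)) v0) = 0"
        using A by (simp add: cm hwv_def app_zero)
      moreover have "app (B I1 I1 (r-a)) v0 = (\<lambda>k. Q1 $ (r-a) * v0 k)" using B by (simp add: hwv_def)
      moreover have "app (A I1 I1 a) v0 = (\<lambda>k. P1 $ a * v0 k)" using A by (simp add: hwv_def)
      ultimately show "(\<Sum>p\<in>UNIV. app (A I1 p a * B p I1 (r - a)) v0) = (\<lambda>k. (P1 $ a * Q1 $ (r - a)) * v0 k)"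
        by (simp add: UNIV_idx app_smul; simp add: fun_eq_iff mult_ac)
    qed
    then show ?thesis by (simp add: sum_smul_fun fps_mult_nth)
  qed
  show "app (prod_fam A B I2 I2 r) v0 = (\<lambda>k. (P2 * Q2) $ r * v0 k)"
  proof -
    have "app (prod_fam A B I2 I2 r) v0 = (\<Sum>a=0..r. (\<lambda>k. (P2 $ a * Q2 $ (r - a)) * v0 k))"
    proof (unfold prod_fam_def app_sum, intro sum.cong refl)
      fix a
      have "app (B I1 I2 (r-a)) v0 = 0" using B by (simp add: hwv_def)
      moreover have "app (B I2 I2 (r-a)) v0 = (\<lambda>k. Q2 $ (r-a) * v0 k)" using B by (simp add: hwv_def)
      moreover have "app (A I2 I2 a) v0 = (\<lambda>k. P2 $ a * v0 k)" using A by (simp add: hwv_def)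
      ultimately show "(\<Sum>p\<in>UNIV. app (A I2 p a * B p I2 (r - a)) v0) = (\<lambda>k. (P2 $ a * Q2 $ (r - a)) * v0 k)"
        by (simp add: UNIV_idx app_smul app_zero; simp add: fun_eq_iff mult_ac)
    qed
    then show ?thesis by (simp add: sum_smul_fun fps_mult_nth)
  qed
qed

lemma v0_nz: "v0 \<kappa> \<noteq> 0 \<Longrightarrow> \<kappa> m = 0"
  by (auto simp: v0_def split: if_splits)

lemma hw_ev: "hwv (ev_fam m a b) (1 + fps_const a * fps_X) (1 + fps_const b * fps_X)"
  unfolding hwv_def
proof (intro allI conjI)
  fix r
  show "app (ev_fam m a b I1 I2 r) v0 = 0"
    by (auto simp: ev_fam_def E_op_def fun_eq_iff app_lop v0_def)
  show "app (ev_fam m a b I1 I1 r) v0 = (\<lambda>k. (1 + fps_const a * fps_X) $ r * v0 k)"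
    by (auto simp: ev_fam_def E_op_def fun_eq_iff app_lop v0_def)
  show "app (ev_fam m a b I2 I2 r) v0 = (\<lambda>k. (1 + fps_const b * fps_X) $ r * v0 k)"
    by (auto simp: ev_fam_def E_op_def fun_eq_iff app_lop v0_def)
qed

lemma hw_sc: "hwv (sc_fam f) (Abs_fps f) (Abs_fps f)"
  by (simp add: hwv_def sc_fam_def)

lemma hw_one: "hwv one_fam 1 1"
  by (auto simp: hwv_def one_fam_def fun_eq_iff)

definition wt1 :: "(complex \<times> complex) list \<Rightarrow> complex fps" where
  "wt1 l = (\<Prod>p\<leftarrow>l. 1 + fps_const (fst p) * fps_X)"
definition wt2 :: "(complex \<times> complex) list \<Rightarrow> complex fps" where
  "wt2 l = (\<Prod>p\<leftarrow>l. 1 + fps_const (snd p) * fps_X)"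

lemma hw_fam_list: "hwv (fam_list l) (wt1 l) (wt2 l)"
proof (induction l)
  case Nil then show ?case by (simp add: hw_one wt1_def wt2_def)
next
  case (Cons p l)
  obtain a b where p: "p = (a, b)" by force
  have "hwv (fam_list (p # l)) (wt1 l * (1 + fps_const a * fps_X)) (wt2 l * (1 + fps_const b * fps_X))"
    unfolding p fam_list.simps using Cons
    by (intro hw_prod hw_ev comm_ev csite_fam_list) auto
  then show ?case by (simp add: wt1_def wt2_def p mult.commute)
qed

definition degf :: "fam \<Rightarrow> nat \<Rightarrow> bool" where
  "degf T n \<longleftrightarrow> (\<forall>i j r. n < r \<longrightarrow> T i j r = 0)"

lemma deg_prod: assumes "degf A n" "degf B m" shows "degf (prod_fam A B) (n + m)"
  unfolding degf_def
proof (intro allI impI)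
  fix i j r assume r: "n + m < r"
  show "prod_fam A B i j r = 0" unfolding prod_fam_def
  proof (rule sum.neutral, intro ballI)
    fix a assume "a \<in> {0..r}"
    show "(\<Sum>p\<in>UNIV. A i p a * B p j (r - a)) = 0"
    proof (cases "n < a")
      case True then show ?thesis using assms(1) by (simp add: degf_def)
    next
      case False then have "m < r - a" using r by linarith
      then show ?thesis using assms(2) by (simp add: degf_def)
    qed
  qed
qed

lemma deg_ev: "degf (ev_fam m a b) 1" by (simp add: degf_def ev_fam_def)
lemma deg_one: "degf one_fam 0" by (simp add: degf_def one_fam_def)

lemma deg_fam_list: "degf (fam_list l) (length l)"
proof (induction l)
  case Nil then show ?case by (simp add: deg_one)
next
  case (Cons p l)
  obtain a b where p: "p = (a, b)" by force
  show ?case using deg_prod[OF Cons deg_ev] by (simp add: p)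
qed


definition sfps :: "complex fps \<Rightarrow> op fps" where "sfps F = Abs_fps (\<lambda>n. scal (F $ n))"

lemma sfps_mult: "sfps F * sfps G = sfps (F * G)"
  by (rule fps_ext) (simp add: sfps_def fps_mult_nth scal_sum scal_mult)

lemma sfps_1: "sfps 1 = 1"
  by (rule fps_ext) (simp add: sfps_def)

lemma Abs_prod_fam: "Abs_fps (prod_fam A B i j) = (\<Sum>p\<in>UNIV. Abs_fps (A i p) * Abs_fps (B p j))"
  by (rule fps_ext) (simp add: prod_fam_def fps_sum_nth fps_mult_nth sum.swap[of _ UNIV])

lemma Abs_twist: "Abs_fps (prod_fam (sc_fam f) S I2 I1) = sfps (Abs_fps f) * Abs_fps (S I2 I1)"
proof -
  have "Abs_fps (sc_fam f I2 I1) = 0" by (rule fps_ext) (simp add: sc_fam_def)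
  moreover have "Abs_fps (sc_fam f I2 I2) = sfps (Abs_fps f)" by (rule fps_ext) (simp add: sc_fam_def sfps_def)
  ultimately show ?thesis by (simp add: Abs_prod_fam UNIV_idx)
qed

lemma key_twist:
  assumes "f 0 = 1"
  shows "(\<Sum>k=0..N. scal (inverse (Abs_fps f) $ k) * prod_fam (sc_fam f) S I2 I1 (N - k)) = S I2 I1 N"
proof -
  have inv: "inverse (Abs_fps f) * Abs_fps f = 1"
    using assms by (intro inverse_mult_eq_1) simp
  have "(\<Sum>k=0..N. scal (inverse (Abs_fps f) $ k) * prod_fam (sc_fam f) S I2 I1 (N - k)) =
      (sfps (inverse (Abs_fps f)) * Abs_fps (prod_fam (sc_fam f) S I2 I1)) $ N"
    by (simp add: fps_mult_nth sfps_def)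
  also have "\<dots> = (sfps (inverse (Abs_fps f)) * sfps (Abs_fps f) * Abs_fps (S I2 I1)) $ N"
    by (simp add: Abs_twist mult.assoc)
  also have "\<dots> = S I2 I1 N" by (simp add: sfps_mult inv sfps_1)
  finally show ?thesis .
qed

lemma sum_single:
  assumes "finite S" "n \<in> S" "\<And>x. x \<in> S \<Longrightarrow> x \<noteq> n \<Longrightarrow> g x = 0"
  shows "sum g S = g n"
  using assms by (simp add: sum.remove[of S n] sum.neutral)

lemma top_right:
  assumes "degf S n"
  shows "prod_fam S (ev_fam m a b) I2 I1 (Suc n) = S I2 I1 n * E_op m a b I1 I1 + S I2 I2 n * E_op m a b I2 I1"
proof -
  have "prod_fam S (ev_fam m a b) I2 I1 (Suc n) = (\<Sum>p\<in>UNIV. S I2 p n * ev_fam m a b p I1 (Suc n - n))"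
    unfolding prod_fam_def
  proof (rule sum_single)
    fix x assume x: "x \<in> {0..Suc n}" "x \<noteq> n"
    show "(\<Sum>p\<in>UNIV. S I2 p x * ev_fam m a b p I1 (Suc n - x)) = 0"
    proof (cases "x = Suc n")
      case True then show ?thesis using assms by (simp add: degf_def)
    next
      case False then have "Suc n - x \<ge> 2" "\<not> Suc n \<le> x" using x by auto
      then show ?thesis by (simp add: ev_fam_def)
    qed
  qed auto
  then show ?thesis by (simp add: UNIV_idx ev_fam_def)
qed

lemma top_left:
  assumes "degf S n"
  shows "prod_fam (ev_fam m a b) S I2 I1 (Suc n) = E_op m a b I2 I1 * S I1 I1 n + E_op m a b I2 I2 * S I2 I1 n"
proof -
  have "prod_fam (ev_fam m a b) S I2 I1 (Suc n) = (\<Sum>p\<in>UNIV. ev_fam m a b I2 p 1 * S p I1 (Suc n - 1))"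
    unfolding prod_fam_def
  proof (rule sum_single)
    fix x assume x: "x \<in> {0..Suc n}" "x \<noteq> 1"
    show "(\<Sum>p\<in>UNIV. ev_fam m a b I2 p x * S p I1 (Suc n - x)) = 0"
    proof (cases "x = 0")
      case True then show ?thesis using assms by (simp add: degf_def ev_fam_def)
    next
      case False then have "x \<ge> 2" using x by auto
      then show ?thesis by (simp add: ev_fam_def)
    qed
  qed auto
  then show ?thesis by (simp add: UNIV_idx ev_fam_def)
qed

lemma lin_prod_coeff:
  "(\<forall>k>length l. (\<Prod>p\<leftarrow>l. 1 + fps_const (c p) * fps_X) $ k = 0) \<and>
   (\<Prod>p\<leftarrow>l. 1 + fps_const (c p) * fps_X) $ length l = (\<Prod>p\<leftarrow>l. c p)"
proof (induction l)
  case Nil then show ?case by simp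
next
  case (Cons q l)
  let ?P = "(\<Prod>p\<leftarrow>l. 1 + fps_const (c p) * fps_X)"
  have e: "(1 + fps_const (c q) * fps_X) * ?P = ?P + fps_const (c q) * (fps_X * ?P)"
    by (simp add: algebra_simps)
  have "\<forall>k>length (q # l). ((1 + fps_const (c q) * fps_X) * ?P) $ k = 0"
  proof (intro allI impI)
    fix k assume k: "length (q # l) < k"
    then have "?P $ k = 0" "?P $ (k - 1) = 0" using Cons by auto
    then show "((1 + fps_const (c q) * fps_X) * ?P) $ k = 0" using k by (simp add: e)
  qed
  moreover have "((1 + fps_const (c q) * fps_X) * ?P) $ length (q # l) = c q * (\<Prod>p\<leftarrow>l. c p)"
    using Cons by (simp add: e)
  ultimately show ?case by simp
qed

lemma F0_v0: "app (E_op m 0 0 I2 I1) v0 ((\<lambda>_. 0)(m := 1)) = 1"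
  by (simp add: E_op_def app_lop v0_def fun_upd_idem_iff)

definition gop :: "fam \<Rightarrow> gen \<Rightarrow> op" where
  "gop T g = (case g of Gen i j r \<Rightarrow> T i j r)"

definition wrd :: "fam \<Rightarrow> gen list \<Rightarrow> op" where
  "wrd T w = prod_list (map (gop T) w)"

lemma wrd_append: "wrd T (u @ v) = wrd T u * wrd T v"
  by (simp add: wrd_def)

definition supp :: "fa \<Rightarrow> gen list set" where "supp f = {w. f w \<noteq> 0}"

definition rho :: "fam \<Rightarrow> fa \<Rightarrow> op" where
  "rho T f = (\<Sum>w\<in>supp f. scal (f w) * wrd T w)"

lemma carrier_iff: "f \<in> fa_carrier \<longleftrightarrow> finite (supp f)"
  by (simp add: fa_carrier_def supp_def)

lemma rho_sup:
  assumes "finite S" "supp f \<subseteq> S"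
  shows "rho T f = (\<Sum>w\<in>S. scal (f w) * wrd T w)"
  unfolding rho_def
  by (rule sum.mono_neutral_left) (use assms in \<open>auto simp: supp_def\<close>)

lemma supp_add: "supp (fa_add f g) \<subseteq> supp f \<union> supp g"
  by (auto simp: supp_def fa_add_def)
lemma supp_sub: "supp (fa_sub f g) \<subseteq> supp f \<union> supp g"
  by (auto simp: supp_def fa_sub_def)
lemma supp_smult: "supp (fa_smult c f) \<subseteq> supp f"
  by (auto simp: supp_def fa_smult_def)

definition catimg :: "gen list set \<Rightarrow> gen list set \<Rightarrow> gen list set" where
  "catimg A B = (\<lambda>(u, v). u @ v) ` (A \<times> B)"

lemma supp_mult: "supp (fa_mult f g) \<subseteq> catimg (supp f) (supp g)"
proof
  fix w assume "w \<in> supp (fa_mult f g)"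
  then have "(\<Sum>k\<le>length w. f (take k w) * g (drop k w)) \<noteq> 0" by (simp add: supp_def fa_mult_def)
  then obtain k where "f (take k w) * g (drop k w) \<noteq> 0" by (meson sum.neutral)
  then have "take k w \<in> supp f" "drop k w \<in> supp g" by (auto simp: supp_def)
  then show "w \<in> catimg (supp f) (supp g)" unfolding catimg_def
    by (intro image_eqI[of _ _ "(take k w, drop k w)"]) auto
qed

lemma finite_catimg: "finite A \<Longrightarrow> finite B \<Longrightarrow> finite (catimg A B)"
  by (simp add: catimg_def)

lemma carrier_add: "f \<in> fa_carrier \<Longrightarrow> g \<in> fa_carrier \<Longrightarrow> fa_add f g \<in> fa_carrier"
  using supp_add by (metis carrier_iff finite_UnI finite_subset)
lemma carrier_sub: "f \<in> fa_carrier \<Longrightarrow> g \<in> fa_carrier \<Longrightarrow> fa_sub f g \<in> fa_carrier"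
  using supp_sub by (metis carrier_iff finite_UnI finite_subset)
lemma carrier_smult: "f \<in> fa_carrier \<Longrightarrow> fa_smult c f \<in> fa_carrier"
  using supp_smult by (metis carrier_iff finite_subset)
lemma carrier_mult: "f \<in> fa_carrier \<Longrightarrow> g \<in> fa_carrier \<Longrightarrow> fa_mult f g \<in> fa_carrier"
  using supp_mult by (metis carrier_iff finite_catimg finite_subset)
lemma carrier_comm: "f \<in> fa_carrier \<Longrightarrow> g \<in> fa_carrier \<Longrightarrow> fa_comm f g \<in> fa_carrier"
  by (simp add: fa_comm_def carrier_sub carrier_mult)

lemma supp_tg: "supp (tg i j r) = {[Gen i j r]}" by (auto simp: supp_def tg_def)
lemma supp_one: "supp fa_one = {[]}" by (auto simp: supp_def fa_one_def)
lemma supp_zero: "supp fa_zero = {}" by (auto simp: supp_def fa_zero_def)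

lemma carrier_tg: "tg i j r \<in> fa_carrier" by (simp add: carrier_iff supp_tg)
lemma carrier_one: "fa_one \<in> fa_carrier" by (simp add: carrier_iff supp_one)
lemma carrier_zero: "fa_zero \<in> fa_carrier" by (simp add: carrier_iff supp_zero)
lemma carrier_kdelta: "kdelta i j \<in> fa_carrier" by (simp add: kdelta_def carrier_one carrier_zero)

lemma rho_tg: "rho T (tg i j r) = T i j r"
  unfolding rho_def supp_tg by (simp add: wrd_def gop_def tg_def)
lemma rho_one: "rho T fa_one = 1"
  unfolding rho_def supp_one by (simp add: wrd_def fa_one_def)
lemma rho_zero: "rho T fa_zero = 0"
  by (simp add: rho_def supp_zero)
lemma rho_kdelta: "rho T (kdelta i j) = (if i = j then 1 else 0)"
  by (simp add: kdelta_def rho_one rho_zero)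

lemma rho_add:
  assumes "f \<in> fa_carrier" "g \<in> fa_carrier"
  shows "rho T (fa_add f g) = rho T f + rho T g"
proof -
  let ?S = "supp f \<union> supp g"
  have fin: "finite ?S" using assms by (simp add: carrier_iff)
  have "rho T (fa_add f g) = (\<Sum>w\<in>?S. scal (fa_add f g w) * wrd T w)"
    using fin supp_add by (rule rho_sup)
  also have "\<dots> = (\<Sum>w\<in>?S. scal (f w) * wrd T w) + (\<Sum>w\<in>?S. scal (g w) * wrd T w)"
    by (simp add: fa_add_def scal_add distrib_right sum.distrib)
  also have "\<dots> = rho T f + rho T g"
    using rho_sup[OF fin, of f T] rho_sup[OF fin, of g T] by auto
  finally show ?thesis .
qed

lemma rho_sub:
  assumes "f \<in> fa_carrier" "g \<in> fa_carrier"
  shows "rho T (fa_sub f g) = rho T f - rho T g"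
proof -
  let ?S = "supp f \<union> supp g"
  have fin: "finite ?S" using assms by (simp add: carrier_iff)
  have "rho T (fa_sub f g) = (\<Sum>w\<in>?S. scal (fa_sub f g w) * wrd T w)"
    using fin supp_sub by (rule rho_sup)
  also have "\<dots> = (\<Sum>w\<in>?S. scal (f w) * wrd T w) - (\<Sum>w\<in>?S. scal (g w) * wrd T w)"
    by (simp add: fa_sub_def scal_diff left_diff_distrib sum_subtractf)
  also have "\<dots> = rho T f - rho T g"
    using rho_sup[OF fin, of f T] rho_sup[OF fin, of g T] by auto
  finally show ?thesis .
qed

lemma rho_smult:
  assumes "f \<in> fa_carrier"
  shows "rho T (fa_smult c f) = scal c * rho T f"
proof -
  have fin: "finite (supp f)" using assms by (simp add: carrier_iff)
  have "rho T (fa_smult c f) = (\<Sum>w\<in>supp f. scal (fa_smult c f w) * wrd T w)"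
    using fin supp_smult by (rule rho_sup)
  also have "\<dots> = scal c * rho T f"
    by (simp add: fa_smult_def scal_mult rho_def sum_distrib_left mult.assoc)
  finally show ?thesis .
qed

lemma rho_mult:
  assumes "f \<in> fa_carrier" "g \<in> fa_carrier"
  shows "rho T (fa_mult f g) = rho T f * rho T g"
proof -
  let ?Sf = "supp f" and ?Sg = "supp g"
  let ?S = "catimg ?Sf ?Sg"
  have ff: "finite ?Sf" "finite ?Sg" using assms by (auto simp: carrier_iff)
  then have fS: "finite ?S" by (simp add: finite_catimg)
  define \<Phi> where "\<Phi> = (\<lambda>(u, v). scal (f u) * wrd T u * (scal (g v) * wrd T v))"
  define h where "h = (\<lambda>(w::gen list, k::nat). (take k w, drop k w))"
  let ?Sig = "Sigma ?S (\<lambda>w. {..length w})"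
  have fSig: "finite ?Sig" using fS by auto
  have "rho T (fa_mult f g) = (\<Sum>w\<in>?S. scal (fa_mult f g w) * wrd T w)"
    using fS supp_mult by (rule rho_sup)
  also have "\<dots> = (\<Sum>w\<in>?S. \<Sum>k\<in>{..length w}. \<Phi> (h (w, k)))"
  proof (intro sum.cong refl)
    fix w
    have "wrd T w = wrd T (take k w) * wrd T (drop k w)" for k
      by (metis append_take_drop_id wrd_append)
    then show "scal (fa_mult f g w) * wrd T w = (\<Sum>k\<in>{..length w}. \<Phi> (h (w, k)))"
      by (simp add: fa_mult_def scal_sum sum_distrib_right \<Phi>_def h_def scal_mult mult.assoc)
        (simp add: scal_comm mult.assoc[symmetric])
  qed
  also have "\<dots> = (\<Sum>(w, k)\<in>?Sig. \<Phi> (h (w, k)))"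
    by (rule sum.Sigma) (use fS in auto)
  also have "\<dots> = (\<Sum>p\<in>?Sig. \<Phi> (h p))"
    by simp
  also have "\<dots> = (\<Sum>p\<in>h ` ?Sig. \<Phi> p)"
  proof (rule sum.reindex[symmetric, unfolded comp_def])
    show "inj_on h ?Sig"
    proof (rule inj_onI)
      fix p q assume "p \<in> ?Sig" "q \<in> ?Sig" "h p = h q"
      then show "p = q" unfolding h_def
        by (cases p; cases q) (auto, metis append_take_drop_id, metis length_take min.absorb2)
    qed
  qed
  also have "\<dots> = (\<Sum>p\<in>?Sf \<times> ?Sg. \<Phi> p)"
  proof (rule sum.mono_neutral_right)
    show "finite (h ` ?Sig)" using fSig by simp
    show "?Sf \<times> ?Sg \<subseteq> h ` ?Sig"
    proof
      fix p assume p: "p \<in> ?Sf \<times> ?Sg"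
      obtain u v where uv: "p = (u, v)" by force
      have "(u @ v, length u) \<in> ?Sig" using p uv by (auto simp: catimg_def)
      moreover have "h (u @ v, length u) = p" by (simp add: h_def uv)
      ultimately show "p \<in> h ` ?Sig" by force
    qed
    show "\<forall>p\<in>h ` ?Sig - ?Sf \<times> ?Sg. \<Phi> p = 0"
      by (auto simp: \<Phi>_def supp_def)
  qed
  also have "\<dots> = rho T f * rho T g"
    by (simp add: rho_def \<Phi>_def sum_product sum.cartesian_product)
  finally show ?thesis .
qed

lemma rho_comm: "f \<in> fa_carrier \<Longrightarrow> g \<in> fa_carrier \<Longrightarrow> rho T (fa_comm f g) = rho T f * rho T g - rho T g * rho T f"
  by (simp add: fa_comm_def rho_sub rho_mult carrier_mult)

lemma rels_ok:
  assumes "yrel T" "x \<in> yangian_rels"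
  shows "x \<in> fa_carrier \<and> rho T x = 0"
  using assms(2) unfolding yangian_rels_def
proof (elim UnE CollectE exE conjE)
  fix i j assume "x = fa_sub (tg i j 0) (kdelta i j)"
  then show ?thesis using assms(1)
    by (simp add: carrier_sub carrier_tg carrier_kdelta rho_sub rho_tg rho_kdelta yrel_def)
next
  fix i j k l r s
  assume x: "x = fa_sub (fa_sub (fa_comm (tg i j (Suc r)) (tg k l s)) (fa_comm (tg i j r) (tg k l (Suc s))))
             (fa_sub (fa_mult (tg k j r) (tg i l s)) (fa_mult (tg k j s) (tg i l r)))"
  have R: "(T i j (Suc r) * T k l s - T k l s * T i j (Suc r)) -
        (T i j r * T k l (Suc s) - T k l (Suc s) * T i j r) = T k j r * T i l s - T k j s * T i l r"
    using assms(1) by (simp add: yrel_def)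
  show ?thesis unfolding x
    by (simp add: carrier_sub carrier_tg carrier_comm carrier_mult rho_sub rho_comm rho_mult rho_tg R)
qed

lemma two_sided_ok:
  assumes "\<And>x. x \<in> R \<Longrightarrow> x \<in> fa_carrier \<and> rho T x = 0" "x \<in> two_sided_ideal R"
  shows "x \<in> fa_carrier \<and> rho T x = 0"
  using assms(2)
proof (induction rule: two_sided_ideal.induct)
  case zero then show ?case by (simp add: carrier_zero rho_zero)
next
  case (gen x a b)
  then show ?case using assms(1)[OF gen(1)] by (simp add: carrier_mult rho_mult)
next
  case (add x y) then show ?case by (simp add: carrier_add rho_add)
next
  case (smult x c) then show ?case by (simp add: carrier_smult rho_smult)
qed

lemma yangian_ok: "yrel T \<Longrightarrow> x \<in> yangian_ideal \<Longrightarrow> x \<in> fa_carrier \<and> rho T x = 0"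
  unfolding yangian_ideal_def by (rule two_sided_ok) (auto dest: rels_ok)

definition phi :: "fam \<Rightarrow> fa \<Rightarrow> vec" where "phi T x = app (rho T x) v0"

lemma left_ok:
  assumes "\<And>x. x \<in> R \<Longrightarrow> x \<in> fa_carrier \<and> phi T x = 0" "x \<in> left_ideal R"
  shows "x \<in> fa_carrier \<and> phi T x = 0"
  using assms(2)
proof (induction rule: left_ideal.induct)
  case zero then show ?case by (simp add: carrier_zero rho_zero phi_def)
next
  case (gen x a)
  then show ?case using assms(1)[OF gen(1)] by (simp add: carrier_mult rho_mult phi_def app_zero)
next
  case (add x y) then show ?case by (simp add: carrier_add rho_add phi_def)
next
  case (smult x c) then show ?case by (simp add: carrier_smult rho_smult phi_def zero_fun_def)
qed

lemma hw_series_nth: "hw_series lam $ r = (if r = 0 then 1 else lam r)"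
  by (simp add: hw_series_def)

lemma verma_ok:
  assumes "yrel T" "hwv T (hw_series lam1) (hw_series lam2)" "x \<in> verma_ideal lam1 lam2"
  shows "x \<in> fa_carrier \<and> phi T x = 0"
proof (rule left_ok[OF _ assms(3)[unfolded verma_ideal_def]])
  fix x assume "x \<in> yangian_ideal \<union> {tg I1 I2 r |r. 1 \<le> r} \<union>
      {fa_sub (tg I1 I1 r) (fa_smult (lam1 r) fa_one) |r. 1 \<le> r} \<union>
      {fa_sub (tg I2 I2 r) (fa_smult (lam2 r) fa_one) |r. 1 \<le> r}"
  then show "x \<in> fa_carrier \<and> phi T x = 0"
  proof (elim UnE CollectE exE conjE)
    assume "x \<in> yangian_ideal" then show ?thesis using yangian_ok[OF assms(1)] by (simp add: phi_def)
  next
    fix r assume "x = tg I1 I2 r" "1 \<le> r"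
    then show ?thesis using assms(2) by (simp add: carrier_tg phi_def rho_tg hwv_def)
  next
    fix r assume x: "x = fa_sub (tg I1 I1 r) (fa_smult (lam1 r) fa_one)" "1 \<le> r"
    then show ?thesis using assms(2)
      by (simp add: carrier_tg carrier_sub carrier_smult carrier_one phi_def rho_tg rho_sub rho_smult
          rho_one hwv_def hw_series_nth)
  next
    fix r assume x: "x = fa_sub (tg I2 I2 r) (fa_smult (lam2 r) fa_one)" "1 \<le> r"
    then show ?thesis using assms(2)
      by (simp add: carrier_tg carrier_sub carrier_smult carrier_one phi_def rho_tg rho_sub rho_smult
          rho_one hwv_def hw_series_nth)
  qed
qed

lemma v0_ne: "v0 \<noteq> 0"
proof
  assume "v0 = 0"
  then have "v0 (\<lambda>_. 0) = 0" by simp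
  then show False by (simp add: v0_def)
qed

lemma reducible_from_reps:
  assumes yA: "yrel TA" and yB: "yrel TB"
    and hA: "hwv TA (hw_series lam1) (hw_series lam2)"
    and hB: "hwv TB (hw_series lam1) (hw_series lam2)"
    and x0: "x0 \<in> fa_carrier" "phi TB x0 = 0" "phi TA x0 \<noteq> 0"
  shows "qmodule_reducible (verma_ideal lam1 lam2)"
proof -
  define L where "L = verma_ideal lam1 lam2"
  have LA: "\<And>x. x \<in> L \<Longrightarrow> x \<in> fa_carrier \<and> phi TA x = 0"
    unfolding L_def using yA hA by (rule verma_ok)
  have LB: "\<And>x. x \<in> L \<Longrightarrow> x \<in> fa_carrier \<and> phi TB x = 0"
    unfolding L_def using yB hB by (rule verma_ok)
  have L0: "fa_zero \<in> L" unfolding L_def verma_ideal_def by (rule left_ideal.zero)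
  have add0: "fa_add x fa_zero = x" "fa_add fa_zero x = x" for x
    by (simp_all add: fa_add_def fa_zero_def)
  have self: "x \<in> qcoset L x" for x
    unfolding qcoset_def by (intro CollectI exI[of _ fa_zero] conjI) (simp_all add: L0 add0)
  have same: "phi T x = phi T y" if "qcoset L x = qcoset L y" "y \<in> fa_carrier"
     "\<And>x. x \<in> L \<Longrightarrow> x \<in> fa_carrier \<and> phi T x = 0" for x y T
  proof -
    have "x \<in> qcoset L y" using self[of x] that(1) by simp
    then obtain l where l: "x = fa_add y l" "l \<in> L" by (auto simp: qcoset_def)
    then show ?thesis using that(2) that(3)[OF l(2)] by (simp add: phi_def rho_add)
  qed
  define N where "N = {qcoset L x | x. x \<in> fa_carrier \<and> phi TB x = 0}"
  have memN: "phi TB x = 0" if xN: "qcoset L x \<in> N" and xc: "x \<in> fa_carrier" for x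
  proof -
    obtain y where "qcoset L x = qcoset L y" "y \<in> fa_carrier" "phi TB y = 0"
      using xN by (auto simp: N_def)
    then show ?thesis using same[of x y TB] LB by auto
  qed
  have sub: "is_submodule L N"
    unfolding is_submodule_def
  proof (intro conjI ballI allI impI)
    show "N \<subseteq> qmodule L" unfolding N_def qmodule_def by auto
    show "qcoset L fa_zero \<in> N" unfolding N_def
      using carrier_zero by (auto simp: phi_def rho_zero)
  next
    fix x y assume xy: "x \<in> fa_carrier" "y \<in> fa_carrier" "qcoset L x \<in> N" "qcoset L y \<in> N"
    then have "phi TB x = 0" "phi TB y = 0" using memN by auto
    then show "qcoset L (fa_add x y) \<in> N" unfolding N_def using xy
      by (auto simp: carrier_add phi_def rho_add)
  next
    fix c x assume x: "x \<in> fa_carrier" "qcoset L x \<in> N"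
    then have "phi TB x = 0" using memN by auto
    then show "qcoset L (fa_smult c x) \<in> N" unfolding N_def using x
      by (auto simp: carrier_smult phi_def rho_smult zero_fun_def)
  next
    fix a x assume x: "a \<in> fa_carrier" "x \<in> fa_carrier" "qcoset L x \<in> N"
    then have "phi TB x = 0" using memN by auto
    then show "qcoset L (fa_mult a x) \<in> N" unfolding N_def using x
      by (auto simp: carrier_mult phi_def rho_mult app_zero)
  qed
  have n1: "N \<noteq> {qcoset L fa_zero}"
  proof
    assume "N = {qcoset L fa_zero}"
    moreover have "qcoset L x0 \<in> N" unfolding N_def using x0 by auto
    ultimately have "qcoset L x0 = qcoset L fa_zero" by auto
    then have "x0 \<in> qcoset L fa_zero" using self[of x0] by simp
    then obtain l where "x0 = fa_add fa_zero l" "l \<in> L" by (auto simp: qcoset_def)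
    then have "x0 \<in> L" using add0 by simp
    then show False using LA x0 by auto
  qed
  have n2: "N \<noteq> qmodule L"
  proof
    assume "N = qmodule L"
    then have "qcoset L fa_one \<in> N" unfolding qmodule_def using carrier_one by auto
    then have "phi TB fa_one = 0" using memN carrier_one by auto
    then show False using v0_ne by (simp add: phi_def rho_one)
  qed
  show ?thesis unfolding qmodule_reducible_def L_def[symmetric] using sub n1 n2 by blast
qed

abbreviation linp :: "complex list \<Rightarrow> complex fps" where
  "linp bs \<equiv> prod_list (map (\<lambda>b. 1 + fps_const b * fps_X) bs)"

lemma linp_0: "linp bs $ 0 = 1"
  by (induction bs) (simp_all add: fps_mult_nth_0)

lemma poly_list_form:
  "\<exists>c m bs. c \<noteq> 0 \<and> (\<forall>b\<in>set bs. b \<noteq> 0) \<and>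
     fps_of_poly (prod_list (map (\<lambda>x. [:-x, 1:]) rs)) = fps_const c * fps_X ^ m * linp bs"
proof (induction rs)
  case Nil then show ?case by (intro exI[of _ 1] exI[of _ 0] exI[of _ "[]"]) simp
next
  case (Cons x rs)
  then obtain c m bs where cmb: "c \<noteq> 0" "\<forall>b\<in>set bs. b \<noteq> 0"
    "fps_of_poly (prod_list (map (\<lambda>x. [:-x, 1:]) rs)) = fps_const c * fps_X ^ m * linp bs" by blast
  have e: "fps_of_poly (prod_list (map (\<lambda>x. [:-x, 1:]) (x # rs))) =
      (fps_X - fps_const x) * (fps_const c * fps_X ^ m * linp bs)"
  proof -
    have "fps_of_poly (prod_list (map (\<lambda>x. [:-x, 1:]) (x # rs))) =
        fps_of_poly [:-x, 1:] * fps_of_poly (prod_list (map (\<lambda>x. [:-x, 1:]) rs))"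
      by (simp only: list.map prod_list.Cons fps_of_poly_mult)
    then show ?thesis by (simp only: cmb(3) fps_of_poly_linear) (simp add: fps_const_neg[symmetric] del: fps_const_neg)
  qed
  show ?case
  proof (cases "x = 0")
    case True
    then show ?thesis using cmb
      by (intro exI[of _ c] exI[of _ "Suc m"] exI[of _ bs]) (unfold e, simp add: mult_ac)
  next
    case False
    have "fps_X - fps_const x = fps_const (- x) * (1 + fps_const (- 1 / x) * fps_X)"
      using False by (simp add: algebra_simps fps_const_mult[symmetric] fps_const_neg[symmetric] del: fps_const_mult fps_const_neg)
    then show ?thesis using cmb False
      by (intro exI[of _ "c * (- x)"] exI[of _ m] exI[of _ "(- 1 / x) # bs"]) (unfold e, simp add: mult_ac)
  qed
qed

lemma poly_fps_form:
  assumes "p \<noteq> 0"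
  shows "\<exists>c m bs. c \<noteq> 0 \<and> (\<forall>b\<in>set bs. b \<noteq> 0) \<and>
     fps_of_poly (p :: complex poly) = fps_const c * fps_X ^ m * linp bs"
proof -
  obtain rs where rs: "mset rs = proots p" using ex_mset by blast
  have "p = smult (lead_coeff p) (\<Prod>x\<in>#proots p. [:-x, 1:])"
    by (rule complex_poly_decompose_multiset [symmetric])
  also have "(\<Prod>x\<in>#proots p. [:-x, 1:]) = prod_list (map (\<lambda>x. [:-x, 1:]) rs)"
    by (subst prod_mset_prod_list [symmetric]) (simp add: rs)
  finally have p: "p = smult (lead_coeff p) (prod_list (map (\<lambda>x. [:-x, 1:]) rs))" .
  obtain c m bs where cmb: "c \<noteq> 0" "\<forall>b\<in>set bs. b \<noteq> 0"
    "fps_of_poly (prod_list (map (\<lambda>x. [:-x, 1:]) rs)) = fps_const c * fps_X ^ m * linp bs"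
    using poly_list_form by blast
  have "fps_of_poly p = fps_const (lead_coeff p * c) * fps_X ^ m * linp bs"
    by (subst p) (simp add: fps_of_poly_smult cmb(3) mult_ac)
  then show ?thesis using cmb assms by (intro exI[of _ "lead_coeff p * c"] exI[of _ m] exI[of _ bs]) simp
qed


lemma linp_replicate0: "linp (replicate k 0) = 1"
  by (induction k) simp_all

lemma linp_append: "linp (xs @ ys) = linp xs * linp ys"
  by simp

lemma wt1_zip: "length as = length bs \<Longrightarrow> wt1 (zip as bs) = linp as"
proof -
  assume "length as = length bs"
  moreover have "map (\<lambda>p. 1 + fps_const (fst p) * fps_X) (zip as bs) =
      map (\<lambda>b. 1 + fps_const b * fps_X) (map fst (zip as bs))" by simp
  ultimately show ?thesis by (simp only: wt1_def map_fst_zip)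
qed
lemma wt2_zip: "length as = length bs \<Longrightarrow> wt2 (zip as bs) = linp bs"
proof -
  assume "length as = length bs"
  moreover have "map (\<lambda>p. 1 + fps_const (snd p) * fps_X) (zip as bs) =
      map (\<lambda>b. 1 + fps_const b * fps_X) (map snd (zip as bs))" by simp
  ultimately show ?thesis by (simp only: wt2_def map_snd_zip)
qed

lemma factor:
  assumes "is_rational_expansion (hw_series lam1 / hw_series lam2)"
  shows "\<exists>f l. f 0 = 1 \<and> hw_series lam1 = Abs_fps f * wt1 l \<and> hw_series lam2 = Abs_fps f * wt2 l \<and>
     ((\<Prod>p\<leftarrow>l. fst p) \<noteq> 0 \<or> (\<Prod>p\<leftarrow>l. snd p) \<noteq> 0)"
proof -
  define H1 where "H1 = hw_series lam1"
  define H2 where "H2 = hw_series lam2"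
  define G where "G = H1 / H2"
  have H20: "H2 $ 0 = 1" "H1 $ 0 = 1" by (simp_all add: H1_def H2_def hw_series_def)
  have Gd: "G = H1 * inverse H2" unfolding G_def using H20 by (simp add: fps_divide_unit)
  have G0: "G $ 0 = 1" using H20 by (simp add: Gd)
  obtain P Q :: "complex poly" where PQ: "Q \<noteq> 0" "fps_of_poly Q * G = fps_of_poly P"
    using assms unfolding is_rational_expansion_def G_def H1_def H2_def by blast
  have "fps_of_poly Q \<noteq> 0" using PQ(1) by simp
  moreover have "G \<noteq> 0" using G0 by auto
  ultimately have "fps_of_poly P \<noteq> 0" using PQ(2) by (metis no_zero_divisors)
  then have P0: "P \<noteq> 0" by auto
  obtain cQ mQ bQ where Qf: "cQ \<noteq> 0" "\<forall>b\<in>set bQ. b \<noteq> 0" "fps_of_poly Q = fps_const cQ * fps_X ^ mQ * linp bQ"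
    using poly_fps_form[OF PQ(1)] by blast
  obtain cP mP aP where Pf: "cP \<noteq> 0" "\<forall>b\<in>set aP. b \<noteq> 0" "fps_of_poly P = fps_const cP * fps_X ^ mP * linp aP"
    using poly_fps_form[OF P0] by blast
  define U where "U = fps_const cQ * linp bQ * G"
  define V where "V = fps_const cP * linp aP"
  have U0: "U $ 0 = cQ" by (simp add: U_def fps_mult_nth_0 linp_0 G0)
  have V0: "V $ 0 = cP" by (simp add: V_def fps_mult_nth_0 linp_0)
  have eq: "fps_X ^ mQ * U = fps_X ^ mP * V"
    using PQ(2) unfolding Qf(3) Pf(3) U_def V_def by (simp add: mult_ac)
  have mm: "mQ = mP"
  proof (rule ccontr)
    assume "mQ \<noteq> mP"
    then consider "mQ < mP" | "mP < mQ" by linarith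
    then show False
    proof cases
      case 1
      have "(fps_X ^ mQ * U) $ mQ = (fps_X ^ mP * V) $ mQ" using eq by simp
      then show False using 1 U0 Qf(1) by (simp add: fps_X_power_mult_nth)
    next
      case 2
      have "(fps_X ^ mQ * U) $ mP = (fps_X ^ mP * V) $ mP" using eq by simp
      then show False using 2 V0 Pf(1) by (simp add: fps_X_power_mult_nth)
    qed
  qed
  have UV: "U = V" using eq mm by simp
  then have cc: "cQ = cP" using U0 V0 by simp
  have LG: "linp bQ * G = linp aP"
    using UV Qf(1) unfolding U_def V_def cc by (simp add: mult.assoc)
  define as' where "as' = aP @ replicate (length bQ - length aP) 0"
  define bs' where "bs' = bQ @ replicate (length aP - length bQ) 0"
  have len: "length as' = length bs'" by (simp add: as'_def bs'_def)
  have la: "linp as' = linp aP" by (simp add: as'_def linp_replicate0)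
  have lb: "linp bs' = linp bQ" by (simp add: bs'_def linp_replicate0)
  define l where "l = zip as' bs'"
  have w1: "wt1 l = linp aP" using len la by (simp add: l_def wt1_zip)
  have w2: "wt2 l = linp bQ" using len lb by (simp add: l_def wt2_zip)
  have pr: "(\<Prod>p\<leftarrow>l. fst p) = prod_list as'" "(\<Prod>p\<leftarrow>l. snd p) = prod_list bs'"
    using len by (simp_all add: l_def map_fst_zip map_snd_zip)
  have nz: "prod_list as' \<noteq> 0 \<or> prod_list bs' \<noteq> 0"
  proof (cases "length aP \<le> length bQ")
    case True
    then have "bs' = bQ" by (simp add: bs'_def)
    then show ?thesis using Qf(2) by (auto simp: prod_list_zero_iff)
  next
    case False
    then have "as' = aP" by (simp add: as'_def)
    then show ?thesis using Pf(2) by (auto simp: prod_list_zero_iff)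
  qed
  define F where "F = H2 * inverse (linp bQ)"
  have iL: "inverse (linp bQ) * linp bQ = 1" by (rule inverse_mult_eq_1) (simp add: linp_0)
  have iH: "inverse H2 * H2 = 1" by (rule inverse_mult_eq_1) (simp add: H20)
  have F0: "F $ 0 = 1" by (simp add: F_def fps_mult_nth_0 H20 linp_0)
  have h2: "H2 = F * wt2 l" by (simp add: w2 F_def mult.assoc iL)
  have "H1 = G * H2" by (simp add: Gd mult.assoc iH)
  also have "\<dots> = F * (linp bQ * G)" by (simp add: h2 w2 mult_ac)
  finally have h1: "H1 = F * wt1 l" by (simp add: LG w1)
  show ?thesis
  proof (intro exI[of _ "fps_nth F"] exI[of _ l] conjI)
    show "F $ 0 = 1" by (rule F0)
    show "hw_series lam1 = Abs_fps (($) F) * wt1 l" using h1 by (simp add: H1_def fps_nth_inverse)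
    show "hw_series lam2 = Abs_fps (($) F) * wt2 l" using h2 by (simp add: H2_def fps_nth_inverse)
    show "(\<Prod>p\<leftarrow>l. fst p) \<noteq> 0 \<or> (\<Prod>p\<leftarrow>l. snd p) \<noteq> 0" using nz by (simp only: pr)
  qed
qed

definition xfa :: "complex fps \<Rightarrow> nat \<Rightarrow> fa" where
  "xfa H N = (\<lambda>w. \<Sum>k=0..N. if w = [Gen I2 I1 (N - k)] then H $ k else 0)"

lemma xfa_supp: "supp (xfa H N) \<subseteq> (\<lambda>k. [Gen I2 I1 (N - k)]) ` {0..N}"
proof
  fix w assume "w \<in> supp (xfa H N)"
  then have ne: "(\<Sum>k=0..N. if w = [Gen I2 I1 (N - k)] then H $ k else 0) \<noteq> 0"
    by (simp add: supp_def xfa_def)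
  have "\<exists>k\<in>{0..N}. (if w = [Gen I2 I1 (N - k)] then H $ k else 0) \<noteq> 0"
  proof (rule ccontr)
    assume "\<not> (\<exists>k\<in>{0..N}. (if w = [Gen I2 I1 (N - k)] then H $ k else 0) \<noteq> 0)"
    then have "(\<Sum>k=0..N. if w = [Gen I2 I1 (N - k)] then H $ k else 0) = 0"
      by (intro sum.neutral) blast
    then show False using ne by contradiction
  qed
  then obtain k where k: "k \<in> {0..N}" "(if w = [Gen I2 I1 (N - k)] then H $ k else 0) \<noteq> 0" by blast
  then have "w = [Gen I2 I1 (N - k)]" by (cases "w = [Gen I2 I1 (N - k)]") simp_all
  then show "w \<in> (\<lambda>k. [Gen I2 I1 (N - k)]) ` {0..N}" using k(1) by blast
qed

lemma xfa_carrier: "xfa H N \<in> fa_carrier"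
  using xfa_supp by (metis carrier_iff finite_atLeastAtMost finite_imageI finite_subset)

lemma xfa_val: "k \<le> N \<Longrightarrow> xfa H N [Gen I2 I1 (N - k)] = H $ k"
proof -
  assume k: "k \<le> N"
  have "xfa H N [Gen I2 I1 (N - k)] = (\<Sum>k'\<in>{0..N}. if [Gen I2 I1 (N - k)] = [Gen I2 I1 (N - k')] then H $ k' else 0)"
    by (simp add: xfa_def)
  also have "\<dots> = (if [Gen I2 I1 (N - k)] = [Gen I2 I1 (N - k)] then H $ k else 0)"
    by (rule sum_single) (use k in auto)
  finally show ?thesis by simp
qed

lemma rho_xfa: "rho T (xfa H N) = (\<Sum>k=0..N. scal (H $ k) * T I2 I1 (N - k))"
proof -
  have inj: "inj_on (\<lambda>k. [Gen I2 I1 (N - k)]) {0..N}"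
    by (rule inj_onI) auto
  have "rho T (xfa H N) = (\<Sum>w\<in>(\<lambda>k. [Gen I2 I1 (N - k)]) ` {0..N}. scal (xfa H N w) * wrd T w)"
    by (rule rho_sup) (simp_all add: xfa_supp)
  also have "\<dots> = (\<Sum>k\<in>{0..N}. scal (xfa H N [Gen I2 I1 (N - k)]) * wrd T [Gen I2 I1 (N - k)])"
    by (simp add: sum.reindex[OF inj])
  also have "\<dots> = (\<Sum>k=0..N. scal (H $ k) * T I2 I1 (N - k))"
    by (intro sum.cong refl) (simp add: xfa_val wrd_def gop_def)
  finally show ?thesis .
qed

lemma F0_v0': "app (E_op m 0 0 I2 I1) v0 ((\<lambda>_. 0)(m := Suc 0)) = 1"
  using F0_v0[of m] by simp

lemma app_zero': "app X (\<lambda>a. 0) = (\<lambda>a. 0)"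
  using app_zero[of X] by (simp add: zero_fun_def)

lemma E11_v0: "app (E_op m 0 b I1 I1) v0 = 0"
  by (auto simp: E_op_def fun_eq_iff app_lop v0_def)
lemma E22_v0: "app (E_op m a 0 I2 I2) v0 = 0"
  by (auto simp: E_op_def fun_eq_iff app_lop v0_def)

lemma csite_lop_app: "csite m X \<Longrightarrow> app X (app (lop m w g) x) = app (lop m w g) (app X x)"
proof -
  assume "csite m X"
  then have "X * lop m w g = lop m w g * X" by (simp add: csite_def)
  then have "app (X * lop m w g) x = app (lop m w g * X) x" by simp
  then show ?thesis by simp
qed

lemma csite_app: "csite m X \<Longrightarrow> app X (app (E_op m a b i j) x) = app (E_op m a b i j) (app X x)"
  by (cases i; cases j) (simp_all add: E_op_def csite_lop_app)

theorem main:
  fixes lam1 lam2 :: "nat \<Rightarrow> complex"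
  assumes "is_rational_expansion (hw_series lam1 / hw_series lam2)"
  shows "qmodule_reducible (verma_ideal lam1 lam2)"
proof -
  obtain f l where fl: "f 0 = 1" "hw_series lam1 = Abs_fps f * wt1 l" "hw_series lam2 = Abs_fps f * wt2 l"
     "(\<Prod>p\<leftarrow>l. fst p) \<noteq> 0 \<or> (\<Prod>p\<leftarrow>l. snd p) \<noteq> 0"
    using factor[OF assms] by blast
  define n where "n = length l"
  define S where "S = fam_list l"
  define x0 where "x0 = xfa (inverse (Abs_fps f)) (Suc n)"
  define TB where "TB = prod_fam (sc_fam f) S"
  have x0c: "x0 \<in> fa_carrier" unfolding x0_def by (rule xfa_carrier)
  have degS: "degf S n" unfolding S_def n_def by (rule deg_fam_list)
  have hS: "hwv S (wt1 l) (wt2 l)" unfolding S_def by (rule hw_fam_list)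
  have yS: "yrel S" unfolding S_def by (rule yrel_fam_list)
  have yB: "yrel TB" unfolding TB_def using fl(1) yS by (intro yrel_prod yrel_sc comm_sc)
  have hB: "hwv TB (hw_series lam1) (hw_series lam2)"
    unfolding TB_def fl(2,3) by (intro hw_prod hw_sc hS comm_sc)
  have phiT: "phi (prod_fam (sc_fam f) T) x0 = app (T I2 I1 (Suc n)) v0" for T
    by (simp only: phi_def x0_def rho_xfa key_twist[of f, OF fl(1)])
  have pB: "phi TB x0 = 0"
    unfolding TB_def phiT using degS by (simp add: degf_def)
  have c1: "wt1 l $ n = (\<Prod>p\<leftarrow>l. fst p)" "wt2 l $ n = (\<Prod>p\<leftarrow>l. snd p)"
    using lin_prod_coeff[of l fst] lin_prod_coeff[of l snd] by (simp_all add: wt1_def wt2_def n_def)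
  have csS: "csite m (S i j r)" if "m = 0 \<or> n < m" for m i j r
    unfolding S_def by (rule csite_fam_list) (use that n_def in auto)
  show ?thesis
    using fl(4)
  proof
    assume nz: "(\<Prod>p\<leftarrow>l. fst p) \<noteq> 0"
    define SA where "SA = prod_fam (ev_fam 0 0 0) S"
    define TA where "TA = prod_fam (sc_fam f) SA"
    have cA: "comm_fam (ev_fam 0 0 0) S"
      by (rule comm_fam_sym, rule comm_ev) (rule csS, simp)
    have yA: "yrel TA" unfolding TA_def SA_def using fl(1) yS cA
      by (intro yrel_prod yrel_sc comm_sc yrel_ev)
    have "hwv SA ((1 + fps_const 0 * fps_X) * wt1 l) ((1 + fps_const 0 * fps_X) * wt2 l)"
      unfolding SA_def using cA hS by (intro hw_prod hw_ev)
    then have "hwv SA (wt1 l) (wt2 l)" by simp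
    then have hA: "hwv TA (hw_series lam1) (hw_series lam2)"
      unfolding TA_def fl(2,3) by (intro hw_prod hw_sc comm_sc)
    have S11: "app (S I1 I1 n) v0 = (\<lambda>k. wt1 l $ n * v0 k)" using hS by (simp add: hwv_def)
    have "phi TA x0 = app (E_op 0 0 0 I2 I1) (app (S I1 I1 n) v0) + app (E_op 0 0 0 I2 I2) (app (S I2 I1 n) v0)"
      unfolding TA_def phiT SA_def top_left[OF degS] by simp
    also have "app (E_op 0 0 0 I2 I2) (app (S I2 I1 n) v0) = 0"
      using csite_app[OF csS[of 0 I2 I1 n], of 0 0 I2 I2 v0] by (simp add: E22_v0 app_zero)
    finally have "phi TA x0 ((\<lambda>_. 0)(0 := 1)) = wt1 l $ n"
      by (simp add: S11 app_smul F0_v0')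
    then have pA: "phi TA x0 \<noteq> 0" using nz c1 by auto
    show ?thesis
      by (rule reducible_from_reps[OF yA yB hA hB x0c pB pA])
  next
    assume nz: "(\<Prod>p\<leftarrow>l. snd p) \<noteq> 0"
    define SA where "SA = fam_list ((0, 0) # l)"
    define TA where "TA = prod_fam (sc_fam f) SA"
    have SAe: "SA = prod_fam S (ev_fam (Suc n) 0 0)" by (simp add: SA_def S_def n_def)
    have yA: "yrel TA" unfolding TA_def SA_def using fl(1)
      by (intro yrel_prod yrel_sc comm_sc yrel_fam_list)
    have "hwv SA (wt1 ((0, 0) # l)) (wt2 ((0, 0) # l))"
      unfolding SA_def by (rule hw_fam_list)
    then have "hwv SA (wt1 l) (wt2 l)" by (simp add: wt1_def wt2_def)
    then have hA: "hwv TA (hw_series lam1) (hw_series lam2)"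
      unfolding TA_def fl(2,3) by (intro hw_prod hw_sc comm_sc)
    have S22: "app (S I2 I2 n) v0 = (\<lambda>k. wt2 l $ n * v0 k)" using hS by (simp add: hwv_def)
    have "phi TA x0 = app (S I2 I1 n) (app (E_op (Suc n) 0 0 I1 I1) v0) +
        app (S I2 I2 n) (app (E_op (Suc n) 0 0 I2 I1) v0)"
      unfolding TA_def phiT SAe top_right[OF degS] by simp
    also have "app (S I2 I2 n) (app (E_op (Suc n) 0 0 I2 I1) v0) = app (E_op (Suc n) 0 0 I2 I1) (app (S I2 I2 n) v0)"
      by (rule csite_app) (rule csS, simp)
    finally have "phi TA x0 ((\<lambda>_. 0)(Suc n := 1)) = wt2 l $ n"
      by (simp add: S22 app_smul F0_v0' E11_v0 app_zero app_zero')
    then have pA: "phi TA x0 \<noteq> 0" using nz c1 by auto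
    show ?thesis
      by (rule reducible_from_reps[OF yA yB hA hB x0c pB pA])
  qed
qed

theorem proposition3p3:
  fixes lam1 lam2 :: "nat \<Rightarrow> complex"
  assumes "is_rational_expansion (hw_series lam1 / hw_series lam2)"
  shows "qmodule_reducible (verma_ideal lam1 lam2)"
  using assms by (rule main)

end
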